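(* Let $p>3$ be a prime and for $1\le k\le p-1$ define $$G(p,k)=\frac{p^2\binom{2p}{p}\binom{2p+2k}{p+k}\binom{2p-2k}{p-k}\binom{p+k}{p}}{2^{8p-2k-4}(2p+2k-1)\binom{2k}{k}}.$$ Then $$G\Big(p,\frac{p+1}{2}\Big)\equiv(-1)^{(p-1)/2}p\left(1-3pq_p(2)+6p^2q_p(2)^2\right)\pmod{p^4}.$$
   Context: $q_p(2)=(2^{p-1}-1)/p$ is the Fermat quotient. Congruences between rationals modulo $p^m$ mean the difference is $p^m$ times a rational with denominator prime to $p$. *)

theory Defs
  imports Complex_Main "HOL-Computational_Algebra.Primes"
begin

definition fermat_quot2 :: "nat \<Rightarrow> rat" where
  "fermat_quot2 p = (2 ^ (p - 1) - 1) / of_nat p"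

definition rat_cong :: "rat \<Rightarrow> rat \<Rightarrow> nat \<Rightarrow> nat \<Rightarrow> bool" where
  "rat_cong a b p m \<longleftrightarrow>
     (\<exists>r::rat. a - b = of_nat (p ^ m) * r \<and> \<not> int p dvd snd (quotient_of r))"

definition G :: "nat \<Rightarrow> nat \<Rightarrow> rat" where
  "G p k = (of_nat (p^2 * ((2*p) choose p) * ((2*p + 2*k) choose (p + k))
              * ((2*p - 2*k) choose (p - k)) * ((p + k) choose p)))
           / (2 ^ (8*p - 2*k - 4) * of_nat (2*p + 2*k - 1) * of_nat ((2*k) choose k))"

end

theory Submission
  imports Defs "HOL-Number_Theory.Number_Theory"
begin

definition zp :: "nat \<Rightarrow> rat \<Rightarrow> bool" where
  "zp p x \<longleftrightarrow> (\<exists>a b. x = of_int a / of_int b \<and> \<not> int p dvd b)"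

definition pd :: "nat \<Rightarrow> nat \<Rightarrow> rat \<Rightarrow> bool" where
  "pd p k x \<longleftrightarrow> (\<exists>y. zp p y \<and> x = of_nat p ^ k * y)"

context
  fixes p :: nat
  assumes pr: "prime p"
begin

lemma zp_int[simp]: "zp p (of_int a)"
  unfolding zp_def using pr
  by (rule_tac x=a in exI, rule_tac x=1 in exI) (auto simp: prime_gt_1_nat)

lemma zp_nat[simp]: "zp p (of_nat a)"
  using zp_int[of "int a"] by simp

lemma zp_0[simp]: "zp p 0" and zp_1[simp]: "zp p 1"
  using zp_int[of 0] zp_int[of 1] by auto

lemma zp_numeral[simp]: "zp p (numeral k)"
  using zp_nat[of "numeral k"] by simp

lemma nd: "\<not> int p dvd b \<Longrightarrow> b \<noteq> 0" by auto

lemma zp_add[intro]: "zp p x \<Longrightarrow> zp p y \<Longrightarrow> zp p (x + y)"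
proof -
  assume "zp p x" "zp p y"
  then obtain a b c d where x: "x = of_int a / of_int b" "\<not> int p dvd b"
    and y: "y = of_int c / of_int d" "\<not> int p dvd d" unfolding zp_def by blast
  have "x + y = of_int (a*d + c*b) / of_int (b*d)"
    using x y nd[OF x(2)] nd[OF y(2)] by (simp add: field_simps)
  moreover have "\<not> int p dvd b*d" using x y pr
    by (metis prime_dvd_mult_iff prime_nat_int_transfer)
  ultimately show ?thesis unfolding zp_def by blast
qed

lemma zp_mult[intro]: "zp p x \<Longrightarrow> zp p y \<Longrightarrow> zp p (x * y)"
proof -
  assume "zp p x" "zp p y"
  then obtain a b c d where x: "x = of_int a / of_int b" "\<not> int p dvd b"
    and y: "y = of_int c / of_int d" "\<not> int p dvd d" unfolding zp_def by blast
  have "x * y = of_int (a*c) / of_int (b*d)"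
    using x y by simp
  moreover have "\<not> int p dvd b*d" using x y pr
    by (metis prime_dvd_mult_iff prime_nat_int_transfer)
  ultimately show ?thesis unfolding zp_def by blast
qed

lemma zp_uminus[intro]: "zp p x \<Longrightarrow> zp p (- x)"
  using zp_mult[of "-1" x] zp_int[of "-1"] by simp

lemma zp_diff[intro]: "zp p x \<Longrightarrow> zp p y \<Longrightarrow> zp p (x - y)"
  using zp_add[of x "-y"] zp_uminus by simp

lemma zp_power[intro]: "zp p x \<Longrightarrow> zp p (x ^ m)"
  by (induction m) auto

lemma zp_sum[intro]: "(\<And>i. i \<in> A \<Longrightarrow> zp p (f i)) \<Longrightarrow> zp p (sum f A)"
  by (induction A rule: infinite_finite_induct) auto

lemma zp_prod[intro]: "(\<And>i. i \<in> A \<Longrightarrow> zp p (f i)) \<Longrightarrow> zp p (prod f A)"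
  by (induction A rule: infinite_finite_induct) auto

lemma zp_div_int: "zp p x \<Longrightarrow> \<not> int p dvd b \<Longrightarrow> zp p (x / of_int b)"
proof -
  assume "zp p x" and b: "\<not> int p dvd b"
  then obtain a c where x: "x = of_int a / of_int c" "\<not> int p dvd c" unfolding zp_def by blast
  have "x / of_int b = of_int a / of_int (c*b)" using x by simp
  moreover have "\<not> int p dvd c*b" using x b pr
    by (metis prime_dvd_mult_iff prime_nat_int_transfer)
  ultimately show ?thesis unfolding zp_def by blast
qed

lemma zp_div_nat: "zp p x \<Longrightarrow> \<not> p dvd b \<Longrightarrow> zp p (x / of_nat b)"
  using zp_div_int[of x "int b"] by (simp add: int_dvd_int_iff)

lemma zp_div_small: "zp p x \<Longrightarrow> 0 < b \<Longrightarrow> b < p \<Longrightarrow> zp p (x / of_nat b)"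
  by (rule zp_div_nat) (auto dest: dvd_imp_le)

lemma pd_zp: "pd p k x \<Longrightarrow> zp p x"
  proof -
  assume "pd p k x"
  then obtain y where "zp p y" "x = of_nat p ^ k * y" unfolding pd_def by auto
  then show ?thesis by (simp add: zp_mult zp_power)
qed

lemma pd0: "pd p 0 x \<longleftrightarrow> zp p x"
  unfolding pd_def by auto

lemma pd_zero[simp]: "pd p k 0"
  unfolding pd_def by (rule exI[of _ 0]) auto

lemma pd_add[intro]: "pd p k x \<Longrightarrow> pd p k y \<Longrightarrow> pd p k (x + y)"
  unfolding pd_def by (auto simp: distrib_left[symmetric])

lemma pd_uminus[intro]: "pd p k x \<Longrightarrow> pd p k (- x)"
  unfolding pd_def by (metis minus_mult_right zp_uminus)

lemma pd_diff[intro]: "pd p k x \<Longrightarrow> pd p k y \<Longrightarrow> pd p k (x - y)"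
  using pd_add[of k x "-y"] pd_uminus by simp

lemma pd_mult: "pd p j x \<Longrightarrow> pd p k y \<Longrightarrow> pd p (j+k) (x * y)"
proof -
  assume "pd p j x" "pd p k y"
  then obtain a b where "zp p a" "x = of_nat p ^ j * a" "zp p b" "y = of_nat p ^ k * b"
    unfolding pd_def by auto
  then have "zp p (a*b)" "x * y = of_nat p ^ (j+k) * (a*b)" by (auto simp: power_add)
  then show ?thesis unfolding pd_def by blast
qed

lemma pd_zmult[intro]: "zp p c \<Longrightarrow> pd p k x \<Longrightarrow> pd p k (c * x)"
  using pd_mult[of 0 c k x] by (simp add: pd0)

lemma pd_zmult2[intro]: "zp p c \<Longrightarrow> pd p k x \<Longrightarrow> pd p k (x * c)"
  using pd_zmult[of c k x] by (simp add: mult.commute)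

lemma pd_mono: "j \<le> k \<Longrightarrow> pd p k x \<Longrightarrow> pd p j x"
proof -
  assume "j \<le> k" "pd p k x"
  then obtain d where d: "k = j + d" using le_Suc_ex by blast
  from \<open>pd p k x\<close> obtain y where y: "zp p y" "x = of_nat p ^ k * y" unfolding pd_def by auto
  have "x = of_nat p ^ j * (of_nat p ^ d * y)" unfolding y(2) d power_add by simp
  moreover have "zp p (of_nat p ^ d * y)" using y(1) by (intro zp_mult zp_power zp_nat)
  ultimately show ?thesis unfolding pd_def by blast
qed

lemma pd_p: "pd p 1 (of_nat p)"
  unfolding pd_def by (rule exI[of _ 1]) auto

lemma pd_pk: "pd p k (of_nat p ^ k * y) \<longleftrightarrow> zp p y"
proof
  assume "pd p k (of_nat p ^ k * y)"
  then obtain z where "zp p z" "of_nat p ^ k * y = of_nat p ^ k * z" unfolding pd_def by auto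
  then show "zp p y" using pr by (simp add: prime_gt_0_nat)
next
  assume "zp p y" then show "pd p k (of_nat p ^ k * y)" unfolding pd_def by blast
qed

lemma pd_power: "pd p j x \<Longrightarrow> pd p (j*m) (x ^ m)"
proof (induction m)
  case 0 then show ?case by (simp add: pd0)
next
  case (Suc m)
  then have "pd p (j + j*m) (x * x^m)" by (intro pd_mult) auto
  then show ?case by simp
qed

lemma pd_sum: "(\<And>i. i \<in> A \<Longrightarrow> pd p k (f i)) \<Longrightarrow> pd p k (sum f A)"
  by (induction A rule: infinite_finite_induct) auto

lemma pd_div_int: "pd p k x \<Longrightarrow> \<not> int p dvd b \<Longrightarrow> pd p k (x / of_int b)"
  unfolding pd_def by (metis times_divide_eq_right zp_div_int)

lemma pd_div_nat: "pd p k x \<Longrightarrow> \<not> p dvd b \<Longrightarrow> pd p k (x / of_nat b)"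
  using pd_div_int[of k x "int b"] by (simp add: int_dvd_int_iff)

lemma zp_unit_inv: "zp p y \<Longrightarrow> pd p 1 (y - 1) \<Longrightarrow> zp p (1 / y)"
proof -
  assume "zp p y" "pd p 1 (y - 1)"
  then obtain z where z: "zp p z" "y - 1 = of_nat p * z" unfolding pd_def by auto
  then obtain a b where ab: "z = of_int a / of_int b" "\<not> int p dvd b" unfolding zp_def by auto
  have b0: "b \<noteq> 0" using nd[OF ab(2)] .
  have y: "y = of_int (b + int p * a) / of_int b"
    using z ab b0 by (simp add: field_simps)
  have nd2: "\<not> int p dvd (b + int p * a)"
    using ab(2) by (metis dvd_add_times_triv_right_iff mult.commute)
  have "1 / y = of_int b / of_int (b + int p * a)" using y b0 nd[OF nd2] by simp
  with nd2 show ?thesis unfolding zp_def by blast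
qed

lemma rat_cong_pd: "pd p m (a - b) \<Longrightarrow> rat_cong a b p m"
proof -
  assume "pd p m (a - b)"
  then obtain r where r: "zp p r" "a - b = of_nat p ^ m * r" unfolding pd_def by auto
  obtain x y where xy: "r = of_int x / of_int y" "\<not> int p dvd y" using r(1) unfolding zp_def by auto
  obtain n d where q: "quotient_of r = (n, d)" by (cases "quotient_of r")
  have r2: "r = of_int n / of_int d" using quotient_of_div[OF q] .
  have d0: "d > 0" using quotient_of_denom_pos[OF q] .
  have cop: "coprime n d" using quotient_of_coprime[OF q] .
  have y0: "y \<noteq> 0" using nd[OF xy(2)] .
  have "of_int (n * y) = (of_int (x * d) :: rat)" using xy r2 d0 y0
    by (simp add: field_simps)
  then have "n * y = x * d" by (simp only: of_int_eq_iff)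
  then have "d dvd n * y" by simp
  then have "d dvd y" using cop by (simp add: coprime_commute coprime_dvd_mult_right_iff)
  then have "\<not> int p dvd d" using xy(2) dvd_trans by blast
  then show ?thesis unfolding rat_cong_def using r q by (auto simp: of_nat_power)
qed

end


definition Hs :: "nat \<Rightarrow> rat" where "Hs m = (\<Sum>i=1..m. 1 / of_nat i)"
definition S2 :: "nat \<Rightarrow> rat" where "S2 m = (\<Sum>i=1..m. 1 / of_nat i ^ 2)"

lemma sum_split_refl:
  fixes n :: nat
  shows "(\<Sum>i=1..2*n. f i) = (\<Sum>i=1..n. f i + f (2*n+1-i))"
proof -
  have "(\<Sum>i=1..2*n. f i) = (\<Sum>i=1..n. f i) + (\<Sum>i=n+1..n+n. f i)"
    using sum.ub_add_nat[where m=1 and n=n and g=f and p=n] by (simp add: mult_2)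
  also have "(\<Sum>i=n+1..n+n. f i) = (\<Sum>i=1..n. f (2*n+1-i))"
    by (rule sum.reindex_bij_witness[where i="\<lambda>i. 2*n+1-i" and j="\<lambda>i. 2*n+1-i"]) auto
  finally show ?thesis by (simp add: sum.distrib)
qed

context
  fixes p :: nat
  assumes pr: "prime p" and p3: "p > 3"
begin

lemma ndv: "0 < i \<Longrightarrow> i < p \<Longrightarrow> \<not> p dvd i"
  by (auto dest: dvd_imp_le)

lemma zp_Hs: "m < p \<Longrightarrow> zp p (Hs m)"
  unfolding Hs_def using pr by (intro zp_sum zp_div_small) auto

lemma zp_S2: "m < p \<Longrightarrow> zp p (S2 m)"
  unfolding S2_def
proof (intro zp_sum[OF pr])
  fix i assume "m < p" "i \<in> {1..m}"
  then have "\<not> p dvd i" using ndv by auto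
  then have "\<not> p dvd i^2" using pr prime_dvd_power by blast
  then have "zp p (1 / of_nat (i^2))" using zp_div_nat[OF pr zp_1[OF pr]] by blast
  then show "zp p (1 / of_nat i ^ 2)" by simp
qed

lemma inv_sq_cong:
  fixes a b :: int
  assumes "\<not> int p dvd a" "\<not> int p dvd b" "int p dvd (a - b)"
  shows "pd p 1 (1 / of_int a ^ 2 - 1 / of_int b ^ 2)"
proof -
  obtain c where c: "b - a = int p * c" using assms(3) by (metis dvd_def minus_diff_eq dvd_minus_iff)
  have a0: "a \<noteq> 0" and b0: "b \<noteq> 0" using assms by auto
  have "1 / of_int a ^ 2 - 1 / of_int b ^ 2 = (of_int (b - a) * of_int (b + a)) / (of_int (a^2 * b^2) :: rat)"
    using a0 b0 by (simp add: field_simps power2_eq_square)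
  also have "\<dots> = of_nat p * (of_int (c * (b + a)) / of_int (a^2 * b^2))"
    unfolding c by simp
  finally have eq: "1 / of_int a ^ 2 - 1 / of_int b ^ 2 = of_nat p * (of_int (c * (b + a)) / (of_int (a^2 * b^2) :: rat))" .
  have "\<not> int p dvd a^2 * b^2" using assms pr
    by (metis prime_dvd_mult_iff prime_dvd_power prime_nat_int_transfer)
  then have "zp p (of_int (c * (b + a)) / of_int (a^2 * b^2))"
    using zp_div_int[OF pr zp_int[OF pr]] by blast
  then show ?thesis unfolding eq pd_def by (intro exI[of _ "of_int (c * (b + a)) / of_int (a^2 * b^2)"]) simp
qed

lemma cop2: "coprime 2 p"
proof -
  have "\<not> p dvd 2" using p3 by (auto dest: dvd_imp_le)
  then have "coprime p 2" using prime_imp_coprime[OF pr] by blast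
  then show ?thesis by (simp only: coprime_commute)
qed

lemma S2_full: "pd p 1 (S2 (p-1))"
proof -
  define A where "A = {1..p-1}"
  define \<sigma> where "\<sigma> i = (2*i) mod p" for i
  have inj: "inj_on \<sigma> A"
  proof
    fix i j assume ij: "i \<in> A" "j \<in> A" "\<sigma> i = \<sigma> j"
    then have "[2*i = 2*j] (mod p)" unfolding \<sigma>_def cong_def by simp
    then have "[i = j] (mod p)" using cong_mult_lcancel_nat[OF cop2] by blast
    then show "i = j" using ij(1,2) unfolding A_def
      by (intro cong_less_modulus_unique_nat) auto
  qed
  have nz: "\<sigma> i \<noteq> 0" if "i \<in> A" for i
  proof
    assume "\<sigma> i = 0"
    then have "p dvd 2*i" unfolding \<sigma>_def by auto
    then have "p dvd i" using cop2 pr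
      by (metis coprime_commute coprime_dvd_mult_right_iff)
    then show False using that ndv unfolding A_def by auto
  qed
  have sub: "\<sigma> ` A \<subseteq> A"
  proof
    fix y assume "y \<in> \<sigma> ` A"
    then obtain i where "i \<in> A" "y = \<sigma> i" by auto
    moreover have "\<sigma> i < p" unfolding \<sigma>_def using pr prime_gt_0_nat by auto
    ultimately show "y \<in> A" using nz unfolding A_def by fastforce
  qed
  have img: "\<sigma> ` A = A" using endo_inj_surj[OF _ sub inj] unfolding A_def by simp
  have e1: "S2 (p-1) = (\<Sum>i\<in>A. 1 / of_nat (\<sigma> i) ^ 2)"
    unfolding S2_def A_def[symmetric]
    by (subst img[symmetric], subst sum.reindex[OF inj]) (simp add: comp_def)
  have e2: "(\<Sum>i\<in>A. 1 / of_int (2 * int i) ^ 2) = S2 (p-1) / 4"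
    unfolding S2_def A_def by (simp add: sum_divide_distrib power_mult_distrib field_simps)
  have d: "pd p 1 ((\<Sum>i\<in>A. 1 / of_nat (\<sigma> i) ^ 2) - (\<Sum>i\<in>A. 1 / of_int (2 * int i) ^ 2))"
    unfolding sum_subtractf[symmetric]
  proof (intro pd_sum[OF pr])
    fix i assume i: "i \<in> A"
    have n1: "\<not> int p dvd int (\<sigma> i)"
    proof
      assume "int p dvd int (\<sigma> i)"
      then have "p dvd \<sigma> i" by simp
      moreover have "\<sigma> i < p" unfolding \<sigma>_def using pr prime_gt_0_nat by auto
      ultimately show False using nz[OF i] by (auto dest: dvd_imp_le)
    qed
    have n2: "\<not> int p dvd 2 * int i"
    proof
      assume "int p dvd 2 * int i"
      then have "p dvd 2 * i" by (metis int_dvd_int_iff of_nat_mult of_nat_numeral)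
      then have "p dvd i" using cop2 by (metis coprime_commute coprime_dvd_mult_right_iff)
      then show False using i ndv unfolding A_def by auto
    qed
    have n3: "int p dvd (int (\<sigma> i) - 2 * int i)"
    proof -
      have "int (\<sigma> i) = (2 * int i) mod int p" unfolding \<sigma>_def by (simp add: zmod_int)
      then show ?thesis by (simp add: mod_eq_dvd_iff[symmetric])
    qed
    show "pd p 1 (1 / of_nat (\<sigma> i) ^ 2 - 1 / of_int (2 * int i) ^ 2)"
      using inv_sq_cong[OF n1 n2 n3] by simp
  qed
  have "pd p 1 (S2 (p-1) - S2 (p-1) / 4)" using d unfolding e1[symmetric] e2 .
  then have "pd p 1 ((4/3) * (S2 (p-1) - S2 (p-1) / 4))"
  proof (intro pd_zmult[OF pr])
    have "\<not> int p dvd 3" using p3 by (auto dest: zdvd_imp_le)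
    then show "zp p (4/3)" using zp_div_int[OF pr zp_int[OF pr], of 3 4] by simp
  qed
  then show ?thesis by simp
qed

lemma S2_half: assumes pn: "p = 2*n+1" shows "pd p 1 (S2 n)"
proof -
  have e: "S2 (p-1) = (\<Sum>i=1..n. 1 / of_nat i ^ 2 + 1 / of_nat (p - i) ^ 2)"
    unfolding S2_def pn using sum_split_refl[where n=n and f="\<lambda>i. 1 / of_nat i ^ 2 :: rat"] by simp
  have "pd p 1 (\<Sum>i=1..n. 1 / of_int (int (p - i)) ^ 2 - 1 / of_int (- int i) ^ 2)"
  proof (intro pd_sum[OF pr])
    fix i assume i: "i \<in> {1..n}"
    have "\<not> int p dvd int (p - i)" using ndv[of "p-i"] i pn by (simp only: int_dvd_int_iff) auto
    moreover have "\<not> int p dvd - int i" using ndv[of "i"] i pn by (simp only: dvd_minus_iff int_dvd_int_iff) auto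
    moreover have "int p dvd (int (p - i) - (- int i))"
      using i pn by (simp add: of_nat_diff algebra_simps)
    ultimately show "pd p 1 (1 / of_int (int (p - i)) ^ 2 - 1 / of_int (- int i) ^ 2)"
      by (intro inv_sq_cong) auto
  qed
  moreover have "S2 (p-1) - 2 * S2 n = (\<Sum>i=1..n. 1 / of_int (int (p - i)) ^ 2 - 1 / of_int (- int i) ^ 2)"
    unfolding e by (simp add: S2_def sum.distrib sum_subtractf sum_distrib_left mult_2)
  ultimately have "pd p 1 (S2 (p-1) - 2 * S2 n)" by simp
  then have "pd p 1 (S2 (p-1) - (S2 (p-1) - 2 * S2 n))"
    using S2_full pd_diff[OF pr] by blast
  then have "pd p 1 (2 * S2 n)" by simp
  moreover have "\<not> int p dvd 2" using p3 by (auto dest: zdvd_imp_le)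
  ultimately have "pd p 1 (2 * S2 n / of_int 2)"
    using pd_div_int[OF pr] by blast
  then show ?thesis by simp
qed

lemma H_full: assumes pn: "p = 2*n+1" shows "pd p 2 (Hs (p-1))"
proof -
  define P where "P = (of_nat p :: rat)"
  have e: "Hs (p-1) = (\<Sum>i=1..n. 1 / of_nat i + 1 / of_nat (p - i))"
    unfolding Hs_def pn using sum_split_refl[where n=n and f="\<lambda>i. 1 / of_nat i :: rat"] by simp
  have t: "1 / of_nat i + 1 / of_nat (p - i) = - P * (1 / of_nat i ^ 2) + P^2 * (1 / (of_nat i ^ 2 * of_nat (p - i)))"
    if i: "i \<in> {1..n}" for i
  proof -
    have d: "of_nat (p - i) = P - of_nat i" using i pn unfolding P_def by (simp add: of_nat_diff)
    have "P - of_nat i \<noteq> 0" "(of_nat i :: rat) \<noteq> 0" using i pn unfolding P_def by auto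
    then show ?thesis unfolding d by (simp add: field_simps power2_eq_square)
  qed
  have h1: "Hs (p-1) = - P * S2 n + P^2 * (\<Sum>i=1..n. 1 / (of_nat i ^ 2 * of_nat (p - i)))"
  proof -
    have "Hs (p-1) = (\<Sum>i=1..n. - P * (1 / of_nat i ^ 2) + P^2 * (1 / (of_nat i ^ 2 * of_nat (p - i))))"
      unfolding e using t by (intro sum.cong) auto
    then show ?thesis unfolding S2_def by (simp only: sum.distrib sum_distrib_left)
  qed
  have h2: "pd p 2 (- P * S2 n)"
    using pd_mult[OF pr pd_p[OF pr] S2_half[OF pn]] unfolding P_def
    by (metis one_add_one minus_mult_left pd_uminus[OF pr])
  have h3: "pd p 2 (P^2 * (\<Sum>i=1..n. 1 / (of_nat i ^ 2 * of_nat (p - i))))"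
    unfolding P_def pd_pk[OF pr]
  proof (intro zp_sum[OF pr])
    fix i assume i: "i \<in> {1..n}"
    have "\<not> p dvd i^2 * (p - i)" using ndv[of i] ndv[of "p - i"] i pn pr
      by (metis atLeastAtMost_iff diff_less le_less_trans less_imp_le_nat lessI prime_dvd_mult_eq_nat prime_dvd_power order_less_le_trans diff_le_self not_less_eq_eq zero_less_diff add_gr_0 less_numeral_extra(1) mult_2 le_add2 Suc_eq_plus1 less_trans_Suc)
    then have "zp p (1 / of_nat (i^2 * (p - i)))" using zp_div_nat[OF pr zp_1[OF pr]] by blast
    then show "zp p (1 / (of_nat i ^ 2 * of_nat (p - i)))" by simp
  qed
  show ?thesis unfolding h1 by (rule pd_add[OF pr h2 h3])
qed

end


context
  fixes p :: nat
  assumes pr: "prime p" and p3: "p > 3"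
begin

lemma expand:
  assumes x: "pd p 1 x"
  shows "m < p \<Longrightarrow> pd p 3 ((\<Prod>i=1..m. (1 + x / of_nat i)) - (1 + x * Hs m + x^2 * ((Hs m ^ 2 - S2 m) / 2)))"
proof (induction m)
  case 0
  then show ?case using pd_zero[OF pr] by (simp add: Hs_def S2_def)
next
  case (Suc m)
  define P where "P = (\<Prod>i=1..m. (1 + x / of_nat i))"
  define H where "H = Hs m"
  define S where "S = S2 m"
  define a where "a = (of_nat (Suc m) :: rat)"
  have a0: "a \<noteq> 0" unfolding a_def by simp
  have IH: "pd p 3 (P - (1 + x * H + x^2 * ((H^2 - S)/2)))"
    using Suc by (simp add: P_def H_def S_def)
  have eP: "(\<Prod>i=1..Suc m. (1 + x / of_nat i)) = P * (1 + x / a)"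
    unfolding P_def a_def by simp
  have eH: "Hs (Suc m) = H + 1 / a" unfolding Hs_def H_def a_def by simp
  have eS: "S2 (Suc m) = S + 1 / a^2" unfolding S2_def S_def a_def by simp
  have key: "P * (1 + x / a) - (1 + x * (H + 1/a) + x^2 * (((H + 1/a)^2 - (S + 1/a^2))/2))
     = (P - (1 + x * H + x^2 * ((H^2 - S)/2))) * (1 + x / a) + x^3 * (((H^2 - S)/2) / a)"
    using a0 by (simp add: field_simps power2_eq_square power3_eq_cube)
  have zx: "zp p x" using pd_zp[OF pr x] .
  have za: "zp p (1 / a)" unfolding a_def using Suc(2) zp_div_small[OF pr zp_1[OF pr], of "Suc m"] by simp
  have zH: "zp p H" unfolding H_def using zp_Hs[OF pr p3] Suc(2) by simp
  have zS: "zp p S" unfolding S_def using zp_S2[OF pr p3] Suc(2) by simp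
  have z1: "zp p (1 + x / a)" using zx za zp_add[OF pr] zp_mult[OF pr] zp_1[OF pr]
    by (metis times_divide_eq_right mult.right_neutral)
  have z2: "zp p (((H^2 - S)/2) / a)"
  proof -
    have "zp p ((H^2 - S) / of_nat 2)" using zp_div_small[OF pr _ _, of "H^2 - S" 2] zH zS p3
      zp_diff[OF pr] zp_power[OF pr] by auto
    then have "zp p ((H^2 - S) / 2)" by simp
    then have "zp p (((H^2 - S)/2) * (1 / a))" using za by (rule zp_mult[OF pr])
    moreover have "((H^2 - S)/2) * (1 / a) = ((H^2 - S)/2) / a" by simp
    ultimately show ?thesis by metis
  qed
  have x3: "pd p 3 (x^3)" using pd_power[OF pr x, of 3] by simp
  have "pd p 3 ((P - (1 + x * H + x^2 * ((H^2 - S)/2))) * (1 + x / a) + x^3 * (((H^2 - S)/2) / a))"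
    by (intro pd_add[OF pr] pd_zmult2[OF pr] IH z1 z2 x3)
  then show ?case unfolding eP eH eS key[symmetric] .
qed

end


lemma prod_binom:
  "(\<Prod>i=1..m. (1 + of_nat a / of_nat i :: rat)) = of_nat ((a + m) choose m)"
proof (induction m)
  case 0 then show ?case by simp
next
  case (Suc m)
  have b: "Suc m * (Suc (a + m) choose Suc m) = Suc (a + m) * ((a + m) choose m)"
    by (rule Suc_times_binomial)
  have b': "(of_nat (Suc (a + m) choose Suc m) :: rat) = of_nat (Suc (a+m)) * of_nat ((a + m) choose m) / of_nat (Suc m)"
  proof -
    have "(of_nat (Suc m) :: rat) * of_nat (Suc (a+m) choose Suc m) = of_nat (Suc (a+m)) * of_nat ((a+m) choose m)"
      using arg_cong[OF b, of "of_nat :: nat \<Rightarrow> rat"] by (simp only: of_nat_mult)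
    then show ?thesis by (simp add: field_simps del: of_nat_Suc binomial_Suc_Suc)
  qed
  have "(\<Prod>i=1..Suc m. (1 + of_nat a / of_nat i :: rat)) = of_nat ((a + m) choose m) * (1 + of_nat a / of_nat (Suc m))"
    using Suc by simp
  also have "\<dots> = of_nat (Suc (a+m)) * of_nat ((a + m) choose m) / of_nat (Suc m)"
    by (simp add: field_simps)
  finally show ?case using b' by simp
qed

lemma prod_n_plus: "(\<Prod>i=1..n. (of_nat n + of_nat i :: rat)) = fact (2*n) / fact n"
proof -
  have "(\<Prod>{1..n+n}) = (\<Prod>{1..n}) * (\<Prod>{n+1..n+n})"
    using prod.ub_add_nat[where m=1 and n=n and g="\<lambda>i. i" and p=n] by simp
  moreover have "(\<Prod>{n+1..n+n}) = (\<Prod>i=1..n. n + i)"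
    using prod.shift_bounds_cl_nat_ivl[where g="\<lambda>i. i" and m=1 and k=n and n=n] by (simp add: add.commute)
  ultimately have "fact (2*n) = (fact n :: rat) * of_nat (\<Prod>i=1..n. n + i)"
    unfolding fact_prod by (simp add: mult_2)
  then show ?thesis by (simp add: field_simps)
qed

lemma prod_F1: "(\<Prod>i=1..n. (of_nat (2*n+1) - of_nat i :: rat)) = fact (2*n) / fact n"
proof -
  have "(\<Prod>i=1..n. (of_nat (2*n+1) - of_nat i :: rat)) = (\<Prod>i=1..n. (of_nat (2*n+1) - of_nat (n + 1 - i) :: rat))"
    using prod.atLeastAtMost_rev[where g="\<lambda>i. (of_nat (2*n+1) - of_nat i :: rat)" and n=1 and m=n] by simp
  also have "\<dots> = (\<Prod>i=1..n. (of_nat n + of_nat i :: rat))"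
    by (intro prod.cong) (auto simp: of_nat_diff)
  finally show ?thesis using prod_n_plus by simp
qed

lemma prod_F2: "(\<Prod>i=1..n. (of_nat (2*n+1) - 2 * of_nat i :: rat)) = (\<Prod>j=1..n. (2 * of_nat j - 1 :: rat))"
proof -
  have "(\<Prod>i=1..n. (of_nat (2*n+1) - 2 * of_nat i :: rat)) = (\<Prod>i=1..n. (of_nat (2*n+1) - 2 * of_nat (n + 1 - i) :: rat))"
    using prod.atLeastAtMost_rev[where g="\<lambda>i. (of_nat (2*n+1) - 2 * of_nat i :: rat)" and n=1 and m=n] by simp
  also have "\<dots> = (\<Prod>j=1..n. (2 * of_nat j - 1 :: rat))"
    by (intro prod.cong) (auto simp: of_nat_diff)
  finally show ?thesis .
qed

lemma prod_F3: "(fact (2*n) :: rat) = 2^n * fact n * (\<Prod>j=1..n. (2 * of_nat j - 1 :: rat))"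
proof (induction n)
  case 0 then show ?case by simp
next
  case (Suc n)
  have e: "2 * Suc n = Suc (Suc (2*n))" by simp
  have "(fact (2 * Suc n) :: rat) = (of_nat (2*n+2)) * (of_nat (2*n+1)) * fact (2*n)"
    unfolding e by (simp add: algebra_simps)
  also have "\<dots> = (of_nat (2*n+2)) * (of_nat (2*n+1)) * (2^n * fact n * (\<Prod>j=1..n. (2 * of_nat j - 1 :: rat)))"
    using Suc by simp
  also have "\<dots> = 2^(Suc n) * fact (Suc n) * (\<Prod>j=1..Suc n. (2 * of_nat j - 1 :: rat))"
    by (simp add: algebra_simps)
  finally show ?case .
qed

lemma prod_neg: "(\<Prod>i=1..n. - f i :: rat) = (-1)^n * (\<Prod>i=1..n. f i)"
  by (induction n) simp_all

lemma prod_fact_rat: "(\<Prod>i=1..n. (of_nat i :: rat)) = fact n"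
  unfolding fact_prod by simp

lemma U_form:
  fixes n :: nat
  defines "P \<equiv> of_nat (2*n+1) :: rat"
  shows "(\<Prod>i=1..n. (1 + (- P) / of_nat i)) = (-1)^n * (fact (2*n) / fact n ^ 2)"
proof -
  have "(\<Prod>i=1..n. (1 + (- P) / of_nat i)) = (\<Prod>i=1..n. - ((P - of_nat i) / of_nat i))"
    by (intro prod.cong) (auto simp: field_simps)
  also have "\<dots> = (-1)^n * ((\<Prod>i=1..n. (P - of_nat i)) / (\<Prod>i=1..n. of_nat i))"
    by (simp only: prod_neg prod_dividef)
  also have "\<dots> = (-1)^n * (fact (2*n) / fact n ^ 2)"
    unfolding P_def prod_F1 prod_fact_rat by (simp add: power2_eq_square)
  finally show ?thesis .
qed

lemma W_form:
  fixes n :: nat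
  defines "P \<equiv> of_nat (2*n+1) :: rat"
  shows "(\<Prod>i=1..n. (1 + (- P / 2) / of_nat i)) = (-1)^n * (fact (2*n) / (4^n * fact n ^ 2))"
proof -
  have "(\<Prod>i=1..n. (1 + (- P / 2) / of_nat i)) = (\<Prod>i=1..n. - ((P - 2 * of_nat i) / (2 * of_nat i)))"
    by (intro prod.cong) (auto simp: field_simps)
  also have "\<dots> = (-1)^n * ((\<Prod>i=1..n. (P - 2 * of_nat i)) / (\<Prod>i=1..n. 2 * of_nat i))"
    by (simp only: prod_neg prod_dividef)
  also have "(\<Prod>i=1..n. (2 * of_nat i :: rat)) = 2^n * fact n"
    using prod_fact_rat[of n] by (simp add: prod.distrib)
  also have "(\<Prod>i=1..n. (P - 2 * of_nat i)) = fact (2*n) / (2^n * fact n)"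
    unfolding P_def prod_F2 prod_F3 by simp
  finally have X: "(\<Prod>i=1..n. (1 + (- P / 2) / of_nat i)) = (-1)^n * (fact (2*n) / (2^n * fact n) / (2^n * fact n))" .
  have "(4::rat)^n = 2^n * 2^n" by (simp flip: power_mult_distrib)
  then show ?thesis unfolding X by (simp add: power2_eq_square)
qed

lemma G_alg:
  fixes x a b c d e g B1 B2 T :: rat
  assumes "a \<noteq> 0" "b \<noteq> 0" "d \<noteq> 0" "e \<noteq> 0" "g \<noteq> 0" "T \<noteq> 0" "x \<ge> 0"
    and c: "c = (2*x+1) * b"
  shows "((2*x+1)^2 * B1 * ((6*x+4)*(6*x+3)*e/(((3*x+2)*d)*((3*x+2)*d))) * B2 * (((3*x+2)*d)/(c*((x+1)*a))))
     / (T * (6*x+3) * (((2*x+2)*(2*x+1)*b)/(((x+1)*a)*((x+1)*a))))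
   = (2*x+1) * (B1 * (g/(c*c))) * (e/(b*g)) * B2 / ((d/(a*c)) * T)"
proof -
  have "3*x+2 \<noteq> 0" "x+1 \<noteq> 0" "2*x+1 \<noteq> 0" "6*x+3 \<noteq> 0" "2*x+2 \<noteq> 0" "6*x+4 \<noteq> 0"
    using assms(7) by linarith+
  then show ?thesis using assms unfolding c
    apply (simp add: divide_simps power2_eq_square)
    by (simp add: algebra_simps)
qed

lemma G_form:
  "G (2*n+1) (n+1) = of_nat (2*n+1) * of_nat ((4*n+2) choose (2*n+1))^2 * of_nat ((6*n+2) choose (2*n))
      * of_nat ((2*n) choose n) / (of_nat ((3*n+1) choose n) * 2^(14*n+2))"
proof -
  have a1: "2 * (2 * n + 1) = 4*n+2" "2 * (2 * n + 1) + 2 * (n + 1) = 6*n+4" "2 * n + 1 + (n + 1) = 3*n+2"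
    "2 * (2 * n + 1) - 2 * (n + 1) = 2*n" "2 * n + 1 - (n + 1) = n" "8 * (2 * n + 1) - 2 * (n + 1) - 4 = 14*n+2"
    "2 * (2 * n + 1) + 2 * (n + 1) - 1 = 6*n+3" "2 * (n + 1) = 2*n+2" "4*n+2 + (2*n+2) = 6*n+4" "4*n+2 - (2*n+2) = 2*n"
    "8 * (2 * n + 1) - (2 * n + 2) - 4 = 14*n+2" "4*n+2 + (2*n+2) - 1 = 6*n+3" "6*n+4-1 = 6*n+3" by auto
  have G1: "G (2*n+1) (n+1) = of_nat ((2*n+1)^2 * ((4*n+2) choose (2*n+1)) * ((6*n+4) choose (3*n+2))
              * ((2*n) choose n) * ((3*n+2) choose (2*n+1))) / (2 ^ (14*n+2) * of_nat (6*n+3) * of_nat ((2*n+2) choose (n+1)))"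
    unfolding G_def a1 ..
  define f :: "nat \<Rightarrow> rat" where "f = fact"
  have fnz: "f k \<noteq> 0" for k unfolding f_def by simp
  have c1: "of_nat ((6*n+4) choose (3*n+2)) = f (6*n+4) / (f (3*n+2) * f (3*n+2))"
    unfolding f_def by (subst binomial_fact) auto
  have c2: "of_nat ((3*n+2) choose (2*n+1)) = f (3*n+2) / (f (2*n+1) * f (n+1))"
    unfolding f_def by (subst binomial_fact) (auto simp: numeral_eq_Suc)
  have c3: "of_nat ((3*n+1) choose n) = f (3*n+1) / (f n * f (2*n+1))"
    unfolding f_def by (subst binomial_fact) (auto simp: numeral_eq_Suc)
  have c4: "of_nat ((6*n+2) choose (2*n)) = f (6*n+2) / (f (2*n) * f (4*n+2))"
    unfolding f_def by (subst binomial_fact) (auto simp: numeral_eq_Suc)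
  have c5: "of_nat ((2*n+2) choose (n+1)) = f (2*n+2) / (f (n+1) * f (n+1))"
    unfolding f_def by (subst binomial_fact) (auto simp: numeral_eq_Suc)
  have f1: "f (6*n+4) = of_nat (6*n+4) * of_nat (6*n+3) * f (6*n+2)"
    unfolding f_def by (simp add: numeral_eq_Suc algebra_simps)
  have f2: "f (3*n+2) = of_nat (3*n+2) * f (3*n+1)"
    unfolding f_def by (simp add: numeral_eq_Suc algebra_simps)
  have f3: "f (2*n+2) = of_nat (2*n+2) * of_nat (2*n+1) * f (2*n)"
    unfolding f_def by (simp add: numeral_eq_Suc algebra_simps)
  have f4: "f (2*n+1) = of_nat (2*n+1) * f (2*n)"
    unfolding f_def by (simp add: numeral_eq_Suc algebra_simps)
  have f5: "f (n+1) = of_nat (n+1) * f n"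
    unfolding f_def by (simp add: algebra_simps)
  have c6: "of_nat ((4*n+2) choose (2*n+1)) = f (4*n+2) / (f (2*n+1) * f (2*n+1))"
    unfolding f_def by (subst binomial_fact) (auto simp: numeral_eq_Suc)
  have "G (2*n+1) (n+1) = of_nat (2*n+1) * (of_nat ((4*n+2) choose (2*n+1)) * (f (4*n+2) / (f (2*n+1) * f (2*n+1))))
      * (f (6*n+2) / (f (2*n) * f (4*n+2))) * of_nat ((2*n) choose n)
      / ((f (3*n+1) / (f n * f (2*n+1))) * 2^(14*n+2))"
    unfolding G1 of_nat_mult c1 c2 c5 f1 f2 f3 f5 of_nat_power
    unfolding of_nat_add of_nat_mult of_nat_numeral of_nat_1
    by (rule G_alg) (use f4 in \<open>auto simp: fnz\<close>)
  then show ?thesis unfolding c3 c4 power2_eq_square c6[symmetric] by simp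
qed



context
  fixes p :: nat
  assumes pr: "prime p" and p3: "p > 3"
begin

lemmas zpI = zp_add[OF pr] zp_mult[OF pr] zp_diff[OF pr] zp_uminus[OF pr] zp_power[OF pr]
  zp_int[OF pr] zp_nat[OF pr] zp_0[OF pr] zp_1[OF pr] zp_numeral[OF pr]

definition c3 :: "rat \<Rightarrow> rat \<Rightarrow> bool" where "c3 x y \<longleftrightarrow> pd p 3 (x - y)"

lemma c3_refl: "c3 x x" unfolding c3_def using pd_zero[OF pr] by simp
lemma c3_sym: "c3 x y \<Longrightarrow> c3 y x" unfolding c3_def using pd_uminus[OF pr] by (metis minus_diff_eq)
lemma c3_trans: "c3 x y \<Longrightarrow> c3 y z \<Longrightarrow> c3 x z" unfolding c3_def using pd_add[OF pr]
  by (metis diff_add_cancel add_diff_eq)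
lemma c3_mult: "c3 a b \<Longrightarrow> c3 c d \<Longrightarrow> zp p c \<Longrightarrow> zp p b \<Longrightarrow> c3 (a*c) (b*d)"
proof -
  assume "c3 a b" "c3 c d" "zp p c" "zp p b"
  then have "pd p 3 ((a - b) * c + b * (c - d))" unfolding c3_def
    by (intro pd_add[OF pr] pd_zmult2[OF pr] pd_zmult[OF pr]) auto
  then show ?thesis unfolding c3_def by (simp add: algebra_simps)
qed

lemma pd_mult': "pd p j x \<Longrightarrow> pd p k y \<Longrightarrow> j + k = l \<Longrightarrow> pd p l (x*y)"
  using pd_mult[OF pr] by blast

lemma zp_div2k: "zp p x \<Longrightarrow> zp p (x / 2^k)"
proof -
  assume x: "zp p x"
  have "\<not> int p dvd 2^k"
  proof
    assume "int p dvd 2^k"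
    then have "int p dvd 2" using prime_dvd_power pr by (metis prime_nat_int_transfer)
    then show False using p3 by (auto dest: zdvd_imp_le)
  qed
  then have "zp p (x / of_int (2^k))" using zp_div_int[OF pr x] by blast
  then show ?thesis by simp
qed

lemma pd_eq: "pd p k x \<Longrightarrow> x = y \<Longrightarrow> pd p k y" by simp

lemma pd_half: "pd p k x \<Longrightarrow> pd p k (x / 2)"
proof -
  assume "pd p k x"
  moreover have "\<not> int p dvd 2" using p3 by (auto dest: zdvd_imp_le)
  ultimately have "pd p k (x / of_int 2)" using pd_div_int[OF pr] by blast
  then show ?thesis by simp
qed

lemma helpA: "pd p 1 x \<Longrightarrow> pd p 2 Hf \<Longrightarrow> pd p 1 Sf \<Longrightarrow> pd p 3 (x*Hf + x^2*((Hf^2 - Sf)/2))"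
proof -
  assume x: "pd p 1 x" and H: "pd p 2 Hf" and S: "pd p 1 Sf"
  have x2: "pd p 2 (x^2)" using pd_power[OF pr x, of 2] by simp
  have a: "pd p 3 (x*Hf)" by (rule pd_mult'[OF x H]) simp
  have "pd p 4 (Hf^2)" using pd_power[OF pr H, of 2] by simp
  then have "pd p 1 (Hf^2 - Sf)" using S pd_mono[OF pr, of 1 4] pd_diff[OF pr] by auto
  then have "pd p 1 ((Hf^2 - Sf) / 2)" by (rule pd_half)
  then have "pd p 3 (x^2*((Hf^2 - Sf)/2))" by (rule pd_mult'[OF x2]) simp
  then show ?thesis using a pd_add[OF pr] by blast
qed

lemma pd3_P2S: "pd p 1 x \<Longrightarrow> pd p 1 S \<Longrightarrow> pd p 3 (x^2 * S / 2)"
proof -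
  assume x: "pd p 1 x" and S: "pd p 1 S"
  have "pd p 3 (x^2 * S)" by (rule pd_mult'[OF pd_power[OF pr x, of 2] S]) simp
  then show ?thesis by (rule pd_half)
qed

lemma zp_prod1: "pd p 1 x \<Longrightarrow> zp p (\<Prod>i=1..m. (1 + x / of_nat i))" if "m < p"
proof (intro zp_prod[OF pr])
  fix i assume "pd p 1 x" "i \<in> {1..m}"
  then have "zp p (x / of_nat i)" using zp_div_small[OF pr pd_zp[OF pr]] that by auto
  then show "zp p (1 + x / of_nat i)" using zpI by blast
qed

lemma main:
  assumes pn: "p = 2*n+1"
  shows "pd p 4 (G p (n+1) - (-1)^n * of_nat p * (1 - 3 * (2^(p-1) - 1) + 6 * (2^(p-1) - 1)^2))"
proof -
  define P where "P = (of_nat p :: rat)"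
  have P0: "P \<noteq> 0" unfolding P_def using pn by simp
  define t where "t = (2::rat)^(p-1) - 1"
  define A1 where "A1 = (\<Prod>i=1..p-1. (1 + P / of_nat i))"
  define A2 where "A2 = (\<Prod>i=1..p-1. (1 + (2*P) / of_nat i))"
  define U where "U = (\<Prod>i=1..n. (1 + (-P) / of_nat i))"
  define V where "V = (\<Prod>i=1..n. (1 + P / of_nat i))"
  define W where "W = (\<Prod>i=1..n. (1 + (-P/2) / of_nat i))"
  have t4: "1 + t = 4^n" unfolding t_def pn by (simp add: power_mult)
  have eA1: "of_nat ((4*n+2) choose (2*n+1)) = 2 * A1"
  proof -
    have h1: "of_nat ((p + p) choose p) = (\<Prod>i=1..p. (1 + P / of_nat i))"
      unfolding P_def by (rule prod_binom[symmetric])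
    have h2: "(\<Prod>i=1..Suc (2*n). (1 + P / of_nat i)) = A1 * (1 + P / of_nat (Suc (2*n)))"
      unfolding A1_def pn by (simp only: prod.cl_ivl_Suc) simp
    have h3: "1 + P / of_nat (Suc (2*n)) = 2" unfolding P_def pn by simp
    have h4: "p + p = 4*n+2" "p = Suc (2*n)" using pn by auto
    show ?thesis using h1 h2 h3 unfolding h4 by simp
  qed
  have eA2: "of_nat ((6*n+2) choose (2*n)) = A2"
  proof -
    have "of_nat ((2*p + (p-1)) choose (p-1)) = A2"
      unfolding A2_def P_def using prod_binom[of "2*p" "p-1"] by simp
    moreover have "2*p + (p-1) = 6*n+2" "p - 1 = 2*n" using pn by auto
    ultimately show ?thesis by metis
  qed
  have eV: "of_nat ((3*n+1) choose n) = V"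
  proof -
    have "of_nat ((p + n) choose n) = V"
      unfolding V_def P_def using prod_binom[of p n] by simp
    moreover have "p + n = 3*n+1" using pn by auto
    ultimately show ?thesis by simp
  qed
  have eU: "of_nat ((2*n) choose n) = (-1)^n * U"
  proof -
    have "U = (-1)^n * (fact (2*n) / fact n ^ 2)" unfolding U_def P_def pn by (rule U_form)
    moreover have "(of_nat ((2*n) choose n) :: rat) = fact (2*n) / (fact n * fact (2*n - n))"
      by (rule binomial_fact) auto
    ultimately show ?thesis by (simp add: power2_eq_square)
  qed
  have eUW: "U = (1 + t) * W"
  proof -
    have "U = (-1)^n * (fact (2*n) / fact n ^ 2)" unfolding U_def P_def pn by (rule U_form)
    moreover have "W = (-1)^n * (fact (2*n) / (4^n * fact n ^ 2))" unfolding W_def P_def pn by (rule W_form)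
    ultimately show ?thesis unfolding t4 by simp
  qed
  have e2: "(2::rat)^(14*n+2) = 4 * (1+t)^7"
  proof -
    have "(4::rat)^n = 2^(2*n)" by (simp add: power_mult)
    moreover have "(2::rat)^(14*n+2) = 4 * (2^(2*n))^7" by (simp add: power_add flip: power_mult)
    ultimately show ?thesis unfolding t4 by simp
  qed
  have GF: "G p (n+1) = (-1)^n * P * (A1^2 * A2 * U) / (V * (1+t)^7)"
  proof -
    have "G p (n+1) = of_nat (2*n+1) * (2*A1)^2 * A2 * ((-1)^n * U) / (V * (4 * (1+t)^7))"
      using G_form[of n] unfolding pn eA1 eA2 eU eV e2 .
    then show ?thesis unfolding P_def pn using t4 by (simp add: power2_eq_square)
  qed
  have zP: "pd p 1 P" using pd_p[OF pr] unfolding P_def .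
  have zP': "zp p P" unfolding P_def by (rule zp_nat[OF pr])
  have tpd: "pd p 1 t"
  proof -
    have "\<not> p dvd 2" using p3 by (auto dest: dvd_imp_le)
    then have "[2^(p-1) = 1] (mod p)" using fermat_theorem[OF pr] by blast
    then have "p dvd 2^(p-1) - 1" by (rule cong_to_1_nat)
    then obtain k where k: "2^(p-1) - 1 = p * k" by blast
    have "t = of_nat (2^(p-1) - 1)" unfolding t_def by (simp add: of_nat_diff)
    also have "\<dots> = P * of_nat k" unfolding k P_def by simp
    finally have "t = of_nat p ^ 1 * of_nat k" unfolding P_def by simp
    then show ?thesis unfolding pd_def using zp_nat[OF pr, of k] by blast
  qed
  have Hf: "pd p 2 (Hs (p-1))" using H_full[OF pr p3 pn] .
  have Sf: "pd p 1 (S2 (p-1))" using S2_full[OF pr p3] .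
  have Sn: "pd p 1 (S2 n)" using S2_half[OF pr p3 pn] .
  have Hn: "zp p (Hs n)" using zp_Hs[OF pr p3] pn by simp
  have np: "n < p" "p - 1 < p" using pn by auto
  have zP2: "pd p 1 (2*P)" using pd_zmult[OF pr zp_numeral[OF pr] zP] by blast
  have zPm: "pd p 1 (-P)" using pd_uminus[OF pr zP] .
  have zPh: "pd p 1 (-P/2)"
  proof -
    show ?thesis using pd_half[OF zPm] by simp
  qed
  have cA1: "c3 A1 1"
  proof -
    have "pd p 3 (A1 - (1 + P * Hs (p-1) + P^2 * ((Hs (p-1) ^ 2 - S2 (p-1)) / 2)))"
      unfolding A1_def by (rule expand[OF pr p3 zP np(2)])
    then have "pd p 3 ((A1 - (1 + P * Hs (p-1) + P^2 * ((Hs (p-1) ^ 2 - S2 (p-1)) / 2)))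
        + (P * Hs (p-1) + P^2 * ((Hs (p-1) ^ 2 - S2 (p-1)) / 2)))"
      using helpA[OF zP Hf Sf] pd_add[OF pr] by blast
    then show ?thesis unfolding c3_def by (simp add: algebra_simps)
  qed
  have cA2: "c3 A2 1"
  proof -
    have "pd p 3 (A2 - (1 + (2*P) * Hs (p-1) + (2*P)^2 * ((Hs (p-1) ^ 2 - S2 (p-1)) / 2)))"
      unfolding A2_def by (rule expand[OF pr p3 zP2 np(2)])
    then have "pd p 3 ((A2 - (1 + (2*P) * Hs (p-1) + (2*P)^2 * ((Hs (p-1) ^ 2 - S2 (p-1)) / 2)))
        + ((2*P) * Hs (p-1) + (2*P)^2 * ((Hs (p-1) ^ 2 - S2 (p-1)) / 2)))"
      using helpA[OF zP2 Hf Sf] pd_add[OF pr] by blast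
    then show ?thesis unfolding c3_def by (simp add: algebra_simps)
  qed
  define h where "h = P * Hs n"
  have cU: "pd p 3 (U - (1 - h + h^2/2))"
  proof -
    have "pd p 3 (U - (1 + (-P) * Hs n + (-P)^2 * ((Hs n ^ 2 - S2 n) / 2)))"
      unfolding U_def by (rule expand[OF pr p3 zPm np(1)])
    then have "pd p 3 ((U - (1 + (-P) * Hs n + (-P)^2 * ((Hs n ^ 2 - S2 n) / 2))) - (-P)^2 * S2 n / 2)"
      using pd3_P2S[OF zPm Sn] pd_diff[OF pr] by blast
    then show ?thesis by (rule pd_eq) (simp add: h_def field_simps power2_eq_square)
  qed
  have cV: "pd p 3 (V - (1 + h + h^2/2))"
  proof -
    have "pd p 3 (V - (1 + P * Hs n + P^2 * ((Hs n ^ 2 - S2 n) / 2)))"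
      unfolding V_def by (rule expand[OF pr p3 zP np(1)])
    then have "pd p 3 ((V - (1 + P * Hs n + P^2 * ((Hs n ^ 2 - S2 n) / 2))) - P^2 * S2 n / 2)"
      using pd3_P2S[OF zP Sn] pd_diff[OF pr] by blast
    then show ?thesis by (rule pd_eq) (simp add: h_def field_simps power2_eq_square)
  qed
  have cW: "pd p 3 (W - (1 - h/2 + h^2/8))"
  proof -
    have "pd p 3 (W - (1 + (-P/2) * Hs n + (-P/2)^2 * ((Hs n ^ 2 - S2 n) / 2)))"
      unfolding W_def by (rule expand[OF pr p3 zPh np(1)])
    then have "pd p 3 ((W - (1 + (-P/2) * Hs n + (-P/2)^2 * ((Hs n ^ 2 - S2 n) / 2))) - (-P/2)^2 * S2 n / 2)"
      using pd3_P2S[OF zPh Sn] pd_diff[OF pr] by blast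
    then show ?thesis by (rule pd_eq) (simp add: h_def field_simps power2_eq_square)
  qed
  obtain d0 where d0: "zp p d0" "U - (1 - h + h^2/2) = P^3 * d0" using cU unfolding pd_def P_def by blast
  obtain d1 where d1: "zp p d1" "W - (1 - h/2 + h^2/8) = P^3 * d1" using cW unfolding pd_def P_def by blast
  obtain d2 where d2: "zp p d2" "V - (1 + h + h^2/2) = P^3 * d2" using cV unfolding pd_def P_def by blast
  obtain tau where tau: "zp p tau" "t = P * tau" using tpd unfolding pd_def P_def by auto
  define eta where "eta = Hs n"
  have eta: "zp p eta" "h = P * eta" unfolding eta_def h_def using Hn by auto
  define D where "D = d0 - (1+t)*d1"
  define e4 where "e4 = 3*eta^2 + 4*tau*eta - P*tau*eta^2 + 8*P*D"
  define X64 where "X64 = -32*tau*e4 + 3*P*e4^2 - 16*tau*eta^2 + 128*D"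
  have eqU: "2*U = 2 - 2*h + h^2 + 2*P^3*d0" using d0(2) by (simp add: field_simps)
  have eqW: "8*W = 8 - 4*h + h^2 + 8*P^3*d1" using d1(2) by (simp add: field_simps)
  have eqV: "2*V = 2 + 2*h + h^2 + 2*P^3*d2" using d2(2) by (simp add: field_simps)
  have E1: "4*h + 8*t = 3*h^2 + 4*t*h - t*h^2 + 8*P^3*D"
  proof -
    have "8*U = (1+t)*(8*W)" using eUW by simp
    then have "4*(2*U) = (1+t)*(8*W)" by simp
    then have "4*(2 - 2*h + h^2 + 2*P^3*d0) = (1+t)*(8 - 4*h + h^2 + 8*P^3*d1)" unfolding eqU eqW .
    then show ?thesis unfolding D_def by (simp add: algebra_simps power2_eq_square power3_eq_cube)
  qed
  have F1: "P^2*e4 = 4*h + 8*t"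
  proof -
    have "P^2*e4 = 3*h^2 + 4*t*h - t*h^2 + 8*P^3*D"
      unfolding e4_def eta(2) tau(2) by (simp add: algebra_simps eval_nat_numeral)
    then show ?thesis using E1 by simp
  qed
  have F3: "128*(P^3*D) = 16*(4*h + 8*t - 3*h^2 - 4*t*h + t*h^2)" using E1 by simp
  have E2: "64*(h + 2*t - t^2) = P^3 * X64"
  proof -
    have "P^3 * X64 = -32*t*(P^2*e4) + 3*(P^2*e4)^2 - 16*t*h^2 + 128*(P^3*D)"
      unfolding X64_def eta(2) tau(2) by (simp add: algebra_simps eval_nat_numeral)
    also have "\<dots> = -32*t*(4*h + 8*t) + 3*(4*h + 8*t)^2 - 16*t*h^2 + 16*(4*h + 8*t - 3*h^2 - 4*t*h + t*h^2)"
      unfolding F1 F3 ..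
    also have "\<dots> = 64*(h + 2*t - t^2)" by (simp add: algebra_simps eval_nat_numeral)
    finally show ?thesis by simp
  qed
  define X where "X = X64 / 64"
  have E3: "h + 2*t - t^2 = P^3 * X" using E2 unfolding X_def by simp
  have zD: "zp p D" unfolding D_def using d0(1) d1(1) tpd pd_zp[OF pr] zpI by meson
  have zX: "zp p X"
  proof -
    have "zp p X64" unfolding X64_def e4_def using zD tau(1) eta(1) zP' by (intro zpI)
    then have "zp p (X64 / 2^6)" by (rule zp_div2k)
    then show ?thesis unfolding X_def by simp
  qed
  have zt: "zp p t" using tpd pd_zp[OF pr] by blast
  have hsub: "h = P^3*X - 2*t + t^2" using E3 by simp
  define YU where "YU = 2*d0 - 2*X - 4*tau^3 + P*tau^4 + 2*X*(-2*t+t^2) + P^3*X^2"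
  define YV where "YV = 2*d2 + 2*X - 4*tau^3 + P*tau^4 + 2*X*(-2*t+t^2) + P^3*X^2"
  have zYU: "zp p (YU/2)"
  proof -
    have "zp p YU" unfolding YU_def using d0(1) zX tau(1) zt zP' by (intro zpI)
    then have "zp p (YU / 2^1)" by (rule zp_div2k)
    then show ?thesis by simp
  qed
  have zYV: "zp p (YV/2)"
  proof -
    have "zp p YV" unfolding YV_def using d2(1) zX tau(1) zt zP' by (intro zpI)
    then have "zp p (YV / 2^1)" by (rule zp_div2k)
    then show ?thesis by simp
  qed
  have cU2: "c3 U ((1+t)^2)"
  proof -
    have "2*(U - (1+t)^2) = 2 - 2*h + h^2 + 2*P^3*d0 - 2*(1+t)^2" using eqU by simp
    also have "\<dots> = P^3 * YU" unfolding hsub YU_def using tau(2)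
      by (simp add: algebra_simps eval_nat_numeral)
    finally have "U - (1+t)^2 = of_nat p ^ 3 * (YU/2)" unfolding P_def by simp
    then show ?thesis unfolding c3_def pd_def using zYU by blast
  qed
  have cV2: "c3 V (1 - 2*t + 3*t^2)"
  proof -
    have "2*(V - (1 - 2*t + 3*t^2)) = 2 + 2*h + h^2 + 2*P^3*d2 - 2*(1 - 2*t + 3*t^2)" using eqV by simp
    also have "\<dots> = P^3 * YV" unfolding hsub YV_def using tau(2)
      by (simp add: algebra_simps eval_nat_numeral)
    finally have "V - (1 - 2*t + 3*t^2) = of_nat p ^ 3 * (YV/2)" unfolding P_def by simp
    then show ?thesis unfolding c3_def pd_def using zYV by blast
  qed
  have zA1: "zp p A1" unfolding A1_def using zp_prod1[OF np(2) zP] .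
  have zA2: "zp p A2" unfolding A2_def using zp_prod1[OF np(2) zP2] .
  have zU: "zp p U" unfolding U_def using zp_prod1[OF np(1) zPm] .
  have zV: "zp p V" unfolding V_def using zp_prod1[OF np(1) zP] .
  define M where "M = (1+t)^7 * (1 - 3*t + 6*t^2)"
  have zM: "zp p M" unfolding M_def using zt by (intro zpI)
  have z1: "zp p (1 - 2*t + 3*t^2)" using zt by (intro zpI)
  have cL: "c3 (A1*A1*A2*U) ((1+t)^2)"
  proof -
    have "c3 (A1*A1) (1*1)" by (rule c3_mult[OF cA1 cA1 zA1 zp_1[OF pr]])
    then have "c3 (A1*A1*A2) (1*1*1)" by (rule c3_mult[OF _ cA2 zA2]) (simp add: zp_1[OF pr])
    then have "c3 (A1*A1*A2*U) (1*1*1*(1+t)^2)" by (rule c3_mult[OF _ cU2 zU]) (simp add: zp_1[OF pr])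
    then show ?thesis by simp
  qed
  have cR: "c3 (V*M) ((1 - 2*t + 3*t^2)*M)" by (rule c3_mult[OF cV2 c3_refl zM z1])
  have cP: "c3 ((1+t)^2) ((1 - 2*t + 3*t^2)*M)"
  proof -
    have "(1+t)^2 - (1 - 2*t + 3*t^2)*M =
      t^3 * (-14 - 46*t - 56*t^2 - 70*t^3 - 176*t^4 - 289*t^5 - 246*t^6 - 105*t^7 - 18*t^8)"
      unfolding M_def by (simp add: algebra_simps eval_nat_numeral)
    moreover have "pd p 3 (t^3 * (-14 - 46*t - 56*t^2 - 70*t^3 - 176*t^4 - 289*t^5 - 246*t^6 - 105*t^7 - 18*t^8))"
    proof (rule pd_zmult2[OF pr])
      show "pd p 3 (t^3)" using pd_power[OF pr tpd, of 3] by simp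
      show "zp p (-14 - 46*t - 56*t^2 - 70*t^3 - 176*t^4 - 289*t^5 - 246*t^6 - 105*t^7 - 18*t^8)"
        using zt by (intro zpI)
    qed
    ultimately show ?thesis unfolding c3_def by simp
  qed
  have cN: "pd p 3 (A1*A1*A2*U - V*M)"
    using c3_trans[OF c3_trans[OF cL cP] c3_sym[OF cR]] unfolding c3_def .
  have V0: "V \<noteq> 0" using eV[symmetric] by simp
  have t0: "1 + t \<noteq> 0" unfolding t4 by simp
  have zVi: "zp p (1 / V)"
  proof (rule zp_unit_inv[OF pr zV])
    have "pd p 1 (V - (1 - 2*t + 3*t^2))" using cV2 pd_mono[OF pr, of 1 3] unfolding c3_def by simp
    moreover have "pd p 1 (t * (3*t - 2))" using pd_zmult2[OF pr _ tpd, of "3*t - 2"] zt by (simp add: zpI)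
    ultimately have "pd p 1 ((V - (1 - 2*t + 3*t^2)) + t * (3*t - 2))" using pd_add[OF pr] by blast
    then show "pd p 1 (V - 1)" by (simp add: algebra_simps power2_eq_square)
  qed
  have zti: "zp p (1 / (1 + t))"
    by (rule zp_unit_inv[OF pr]) (use zt tpd in \<open>auto intro: zpI\<close>)
  have eqG: "G p (n+1) - (-1)^n * P * (1 - 3*t + 6*t^2)
      = (P * (A1*A1*A2*U - V*M)) * ((-1)^n * (1 / V) * (1 / (1 + t))^7)"
    unfolding GF M_def using V0 t0 by (simp add: field_simps power2_eq_square)
  have "pd p 4 ((P * (A1*A1*A2*U - V*M)) * ((-1)^n * (1 / V) * (1 / (1 + t))^7))"
  proof (rule pd_zmult2[OF pr])
    show "pd p 4 (P * (A1*A1*A2*U - V*M))" by (rule pd_mult'[OF zP cN]) simp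
    show "zp p ((-1)^n * (1 / V) * (1 / (1 + t))^7)" using zVi zti by (intro zpI)
  qed
  then have "pd p 4 (G p (n+1) - (-1)^n * P * (1 - 3*t + 6*t^2))" by (simp only: eqG)
  then show ?thesis unfolding P_def t_def .
qed

end

theorem lemma2p4:
  fixes p :: nat
  assumes "prime p" and "p > 3"
  shows "rat_cong (G p ((p + 1) div 2))
           ((-1) ^ ((p - 1) div 2) * of_nat p
             * (1 - 3 * of_nat p * fermat_quot2 p + 6 * of_nat p ^ 2 * fermat_quot2 p ^ 2))
           p 4"
proof -
  have "odd p" using prime_odd_nat[OF assms(1)] assms(2) by simp
  then obtain n where pn: "p = 2*n+1" using oddE by blast
  have k: "(p + 1) div 2 = n+1" "(p - 1) div 2 = n" using pn by auto
  have f: "of_nat p * fermat_quot2 p = 2^(p-1) - 1"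
    unfolding fermat_quot2_def using assms(2) by simp
  have f2: "(of_nat p :: rat) ^ 2 * fermat_quot2 p ^ 2 = (2^(p-1) - 1)^2"
    unfolding f[symmetric] by (simp add: power_mult_distrib)
  have e: "(1 - 3 * of_nat p * fermat_quot2 p + 6 * of_nat p ^ 2 * fermat_quot2 p ^ 2)
      = (1 - 3 * (2^(p-1) - 1) + 6 * (2^(p-1) - 1)^2 :: rat)"
    using f f2 by (simp add: mult.assoc)
  show ?thesis unfolding k e
    by (rule rat_cong_pd[OF assms(1) main[OF assms pn]])
qed

end
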